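(* Let $\mathbf a=(a_1,\dots,a_m)$ be an irreducible sequence, and for a nonnegative integer $x$ let $\mathbf m'(\mathbf a,x)$ be the $m\times m$ matrix whose $(i,j)$-entry is $$\frac{(q^{2x+2i};q^2)_{a_j+1-2i}}{(q^{2x+2i};q)_{a_j+1-2i}\,(q;q)_{a_j+1-2i}}$$ if $a_j+1-2i\ge 0$, and $0$ otherwise. Then there exists a lower triangular $m\times m$ matrix $\mathbf f(\mathbf a)$ with entries in the field $\mathbb C(q)$ of rational functions, all diagonal entries equal to $1$, and whose entries do not depend on $x$, such that for every nonnegative integer $x$ the product $\mathbf m'(\mathbf a,x)\cdot \mathbf f(\mathbf a)$ is upper triangular and its diagonal entries are elements of $\mathbb C(q)$ that do not depend on $x$.
   Context: $q$ is an indeterminate. For integers $n\ge 0$, $(a;q)_n=\prod_{j=0}^{n-1}(1-aq^j)$ (so $(a;q)_0=1$). A finite sequence of integers $\mathbf a=(a_1,\dots,a_m)$ is called admissible if it is strictly increasing and $2i-1\le a_i\le 2m$ for all $1\le i\le m$. An admissible sequence is called irreducible if moreover $2i+1\le a_i\le 2m$ for all $1\le i<m$ and $a_m=2m$. *)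

theory Defs
  imports Complex_Main "HOL-Computational_Algebra.Polynomial" "HOL-Computational_Algebra.Fraction_Field"
begin

type_synonym ratfun = "complex poly fract"

definition qvar :: ratfun where
  "qvar = Fract [:0, 1:] 1"

definition qpoch :: "ratfun \<Rightarrow> ratfun \<Rightarrow> nat \<Rightarrow> ratfun" where
  "qpoch a b n = (\<Prod>j<n. 1 - a * b ^ j)"

text \<open>Sequences a = (a_1,...,a_m) are lists of integers; a_i = a ! (i-1).\<close>
definition admissible :: "int list \<Rightarrow> bool" where
  "admissible a \<longleftrightarrow> sorted_wrt (<) a \<and>
     (\<forall>i\<in>{1..length a}. 2 * int i - 1 \<le> a ! (i - 1) \<and> a ! (i - 1) \<le> 2 * int (length a))"

definition irreducible_seq :: "int list \<Rightarrow> bool" where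
  "irreducible_seq a \<longleftrightarrow> admissible a \<and> a \<noteq> [] \<and>
     (\<forall>i\<in>{1..<length a}. 2 * int i + 1 \<le> a ! (i - 1) \<and> a ! (i - 1) \<le> 2 * int (length a)) \<and>
     a ! (length a - 1) = 2 * int (length a)"

text \<open>The matrix m'(a,x), indices i,j in {1..m}.\<close>
definition mprime :: "int list \<Rightarrow> nat \<Rightarrow> nat \<Rightarrow> nat \<Rightarrow> ratfun" where
  "mprime a x i j =
     (let k = a ! (j - 1) + 1 - 2 * int i in
      if k \<ge> 0 then
        qpoch (qvar ^ (2 * x + 2 * i)) (qvar ^ 2) (nat k) /
          (qpoch (qvar ^ (2 * x + 2 * i)) qvar (nat k) * qpoch qvar qvar (nat k))
      else 0)"

definition matmul :: "nat \<Rightarrow> (nat \<Rightarrow> nat \<Rightarrow> ratfun) \<Rightarrow> (nat \<Rightarrow> nat \<Rightarrow> ratfun) \<Rightarrow> nat \<Rightarrow> nat \<Rightarrow> ratfun" where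
  "matmul m A B i j = (\<Sum>k=1..m. A i k * B k j)"

end

theory Submission imports Defs Jordan_Normal_Form.Determinant begin

lemma qvar_to_fract: "qvar = to_fract [:0,1:]" by (simp add: qvar_def to_fract_def)

lemma to_fract_power: "to_fract (x ^ k) = to_fract x ^ k"
  by (induct k) simp_all

lemma qvar_pow: "qvar ^ k = to_fract ([:0,1:]^k)"
  by (simp add: qvar_to_fract to_fract_power)

lemma qpow_ne1: assumes "k > 0" shows "qvar ^ k \<noteq> 1"
proof
  assume "qvar ^ k = 1"
  hence "to_fract ([:0,1::complex:]^k) = to_fract 1" by (simp add: qvar_pow)
  hence "([:0,1::complex:]^k) = 1" by (metis to_fract_eq_iff)
  hence "degree ([:0,1::complex:]^k) = 0" by simp
  moreover have "degree ([:0,1::complex:]^k) = k" by (simp add: degree_power_eq)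
  ultimately show False using assms by simp
qed

lemma omq_ne0: "k > 0 \<Longrightarrow> 1 - qvar ^ k \<noteq> 0"
  using qpow_ne1 by auto

lemma qpoch_Suc: "qpoch a b (Suc n) = qpoch a b n * (1 - a * b ^ n)"
  by (simp add: qpoch_def)

lemma qpoch_Suc': "qpoch a b (Suc n) = (1 - a) * qpoch (a * b) b n"
  unfolding qpoch_def by (subst prod.lessThan_Suc_shift) (simp add: mult.assoc)

lemma qpoch_0[simp]: "qpoch a b 0 = 1" by (simp add: qpoch_def)

lemma qpoch_ne0: assumes "e > 0" shows "qpoch (qvar ^ e) (qvar ^ d) n \<noteq> 0"
proof -
  have "\<forall>j<n. 1 - qvar ^ e * (qvar ^ d) ^ j \<noteq> 0"
  proof (intro allI impI)
  fix j assume "j < n"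
  have "qvar ^ e * (qvar ^ d) ^ j = qvar ^ (e + d * j)" by (simp add: power_add power_mult)
  thus "1 - qvar ^ e * (qvar ^ d) ^ j \<noteq> 0" using omq_ne0[of "e + d*j"] assms by simp
  qed
  thus ?thesis unfolding qpoch_def by simp
qed

lemma qpoch_ne0': "qpoch qvar qvar n \<noteq> 0"
  using qpoch_ne0[of 1 1 n] by simp

definition einv :: "int \<Rightarrow> ratfun" where
  "einv n = (if n < 0 then 0 else 1 / qpoch qvar qvar (nat n))"

definition phi :: "nat \<Rightarrow> nat \<Rightarrow> ratfun" where
  "phi N e = qpoch (qvar^e) (qvar^2) N / (qpoch (qvar^e) qvar N * qpoch qvar qvar N)"

definition Bc :: "nat \<Rightarrow> nat \<Rightarrow> ratfun" where
  "Bc r e = qvar^(r*(2*r-1) + e*r) / (qpoch (qvar^2) (qvar^2) r * qpoch (qvar^(e+1)) (qvar^2) r)"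

lemma einv_step: "(1 - qvar ^ m) * einv (int m) = einv (int m - 1)"
proof (cases m)
  case 0 thus ?thesis by (simp add: einv_def)
next
  case (Suc k)
  have "einv (int m - 1) = 1 / qpoch qvar qvar k" using Suc by (simp add: einv_def)
  moreover have "einv (int m) = 1 / (qpoch qvar qvar m)" by (simp add: einv_def)
  moreover have "qpoch qvar qvar m = qpoch qvar qvar k * (1 - qvar ^ m)"
    using Suc qpoch_Suc[of qvar qvar k] by simp
  moreover have "1 - qvar ^ m \<noteq> 0" using Suc by (intro omq_ne0) simp
  moreover have "qpoch qvar qvar k \<noteq> 0" by (rule qpoch_ne0')
  ultimately show ?thesis by (simp only:) (simp add: field_simps del: power_Suc)
qed

lemma einv_neg: "n < 0 \<Longrightarrow> einv n = 0" by (simp add: einv_def)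

lemma phi_0: "phi 0 e = 1" by (simp add: phi_def)

lemma phi_rec: assumes e: "e > 0"
  shows "phi (Suc N) e * (1 - qvar^(Suc N)) * (1 - qvar^(e+1)) = (1 - qvar^(e + Suc N)) * phi N (e+2)"
proof -
  let ?Q = qvar
  have A: "qpoch (?Q^e) (?Q^2) (Suc N) = (1 - ?Q^e) * qpoch (?Q^(e+2)) (?Q^2) N"
    using qpoch_Suc'[of "?Q^e" "?Q^2" N] by (simp only: power_add)
  have B: "qpoch (?Q^e) ?Q (Suc N) = (1 - ?Q^e) * qpoch (?Q^(e+1)) ?Q N"
    using qpoch_Suc'[of "?Q^e" "?Q" N] by (simp only: power_add power_one_right)
  have C: "qpoch (?Q^(e+1)) ?Q N * (1 - ?Q^(e + Suc N)) = (1 - ?Q^(e+1)) * qpoch (?Q^(e+2)) ?Q N"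
  proof -
    have "?Q^(e+1) * ?Q^N = ?Q^(e + Suc N)" by (simp add: power_add[symmetric])
    hence "qpoch (?Q^(e+1)) ?Q (Suc N) = qpoch (?Q^(e+1)) ?Q N * (1 - ?Q^(e + Suc N))"
      using qpoch_Suc[of "?Q^(e+1)" ?Q N] by simp
    moreover have "qpoch (?Q^(e+1)) ?Q (Suc N) = (1 - ?Q^(e+1)) * qpoch (?Q^(e+2)) ?Q N"
      using qpoch_Suc'[of "?Q^(e+1)" ?Q N] by (simp only: power_add power_one_right mult.assoc power2_eq_square)
    ultimately show ?thesis by simp
  qed
  have D: "qpoch ?Q ?Q (Suc N) = qpoch ?Q ?Q N * (1 - ?Q^(Suc N))"
    by (simp add: qpoch_Suc)
  have n1: "1 - ?Q^e \<noteq> 0" using omq_ne0 e by simp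
  have n2: "qpoch (?Q^(e+1)) ?Q N \<noteq> 0" using qpoch_ne0[of "e+1" 1 N] by simp
  have n3: "qpoch (?Q^(e+2)) ?Q N \<noteq> 0" using qpoch_ne0[of "e+2" 1 N] by simp
  have n4: "qpoch ?Q ?Q N \<noteq> 0" by (rule qpoch_ne0')
  have n5: "1 - ?Q^(Suc N) \<noteq> 0" by (rule omq_ne0) simp
  have n6: "1 - ?Q^(e+1) \<noteq> 0" by (rule omq_ne0) simp
  have n7: "1 - ?Q^(e+Suc N) \<noteq> 0" by (rule omq_ne0) simp
  have "phi (Suc N) e = (1 - ?Q^e) * qpoch (?Q^(e+2)) (?Q^2) N /
      ((1 - ?Q^e) * qpoch (?Q^(e+1)) ?Q N * (qpoch ?Q ?Q N * (1 - ?Q^(Suc N))))"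
    unfolding phi_def A B D by (simp add: mult.assoc)
  also have "\<dots> = qpoch (?Q^(e+2)) (?Q^2) N /
      (qpoch (?Q^(e+1)) ?Q N * (qpoch ?Q ?Q N * (1 - ?Q^(Suc N))))"
    using n1 by simp
  finally have P: "phi (Suc N) e = qpoch (?Q^(e+2)) (?Q^2) N /
      (qpoch (?Q^(e+1)) ?Q N * (qpoch ?Q ?Q N * (1 - ?Q^(Suc N))))" .
  have C': "qpoch (?Q^(e+1)) ?Q N = (1 - ?Q^(e+1)) * qpoch (?Q^(e+2)) ?Q N / (1 - ?Q^(e + Suc N))"
    using C n7 by (simp add: field_simps)
  have G: "\<And>a2 d2 c U V W :: ratfun. d2 \<noteq> 0 \<Longrightarrow> c \<noteq> 0 \<Longrightarrow> U \<noteq> 0 \<Longrightarrow> V \<noteq> 0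
     \<Longrightarrow> W \<noteq> 0 \<Longrightarrow>
     a2 / (V * d2 / W * (c * U)) * U * V = W * (a2 / (d2 * c))"
    by (simp add: field_simps)
  have "phi N (e+2) = qpoch (?Q^(e+2)) (?Q^2) N / (qpoch (?Q^(e+2)) ?Q N * qpoch ?Q ?Q N)"
    by (simp only: phi_def)
  thus ?thesis unfolding P by (simp only:) (subst C', rule G[OF n3 n4 n5 n6 n7])
qed

lemma Bc_0: "Bc 0 e = 1" by (simp add: Bc_def)

lemma Bc_R2: "Bc r (e+2) * (1 - qvar^(e+2*r+1)) = qvar^(2*r) * (1 - qvar^(e+1)) * Bc r e"
proof -
  let ?Q = qvar
  have K: "qpoch (?Q^(e+1)) (?Q^2) r * (1 - ?Q^(e+2*r+1)) = (1 - ?Q^(e+1)) * qpoch (?Q^(e+3)) (?Q^2) r"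
  proof -
    have "?Q^(e+1) * (?Q^2)^r = ?Q^(e+2*r+1)" by (simp add: power_add[symmetric] power_mult[symmetric] ac_simps)
    hence "qpoch (?Q^(e+1)) (?Q^2) (Suc r) = qpoch (?Q^(e+1)) (?Q^2) r * (1 - ?Q^(e+2*r+1))"
      using qpoch_Suc[of "?Q^(e+1)" "?Q^2" r] by simp
    moreover have "?Q^(e+1) * ?Q^2 = ?Q^(e+3)" by (simp add: power_add eval_nat_numeral)
    hence "qpoch (?Q^(e+1)) (?Q^2) (Suc r) = (1 - ?Q^(e+1)) * qpoch (?Q^(e+3)) (?Q^2) r"
      using qpoch_Suc'[of "?Q^(e+1)" "?Q^2" r] by simp
    ultimately show ?thesis by simp
  qed
  have n1: "qpoch (?Q^2) (?Q^2) r \<noteq> 0" by (rule qpoch_ne0) simp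
  have n2: "qpoch (?Q^(e+1)) (?Q^2) r \<noteq> 0" by (rule qpoch_ne0) simp
  have n3: "qpoch (?Q^(e+3)) (?Q^2) r \<noteq> 0" by (rule qpoch_ne0) simp
  have exn: "r*(2*r-1) + (e+2)*r = 2*r + (r*(2*r-1) + e*r)" by (simp add: algebra_simps)
  have ex: "?Q^(r*(2*r-1) + (e+2)*r) = ?Q^(2*r) * ?Q^(r*(2*r-1) + e*r)"
    unfolding exn by (rule power_add)
  have "e + 2 + 1 = e + 3" by simp
  hence Bd: "Bc r (e+2) = ?Q^(r*(2*r-1) + (e+2)*r) / (qpoch (?Q^2) (?Q^2) r * qpoch (?Q^(e+3)) (?Q^2) r)"
    unfolding Bc_def by (simp only:)
  have G: "\<And>P A B C D W V :: ratfun. A \<noteq> 0 \<Longrightarrow> B \<noteq> 0 \<Longrightarrow> C \<noteq> 0 \<Longrightarrow> B * W = V * C \<Longrightarrow>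
      P * D / (A * C) * W = P * V * (D / (A * B))"
    by (simp add: field_simps)
  show ?thesis unfolding Bd ex unfolding Bc_def by (rule G[OF n1 n2 n3 K])
qed

lemma Bc_R3: "Bc (Suc r) e * (1 - qvar^(2*r+2)) * (1 - qvar^(e+2*r+1)) = qvar^(4*r+1+e) * Bc r e"
proof -
  let ?Q = qvar
  have K1: "qpoch (?Q^2) (?Q^2) (Suc r) = qpoch (?Q^2) (?Q^2) r * (1 - ?Q^(2*r+2))"
  proof -
    have "?Q^2 * (?Q^2)^r = ?Q^(2*r+2)" by (simp add: power_add[symmetric] power_mult[symmetric] ac_simps)
    thus ?thesis using qpoch_Suc[of "?Q^2" "?Q^2" r] by simp
  qed
  have K2: "qpoch (?Q^(e+1)) (?Q^2) (Suc r) = qpoch (?Q^(e+1)) (?Q^2) r * (1 - ?Q^(e+2*r+1))"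
  proof -
    have "?Q^(e+1) * (?Q^2)^r = ?Q^(e+2*r+1)" by (simp add: power_add[symmetric] power_mult[symmetric] ac_simps)
    thus ?thesis using qpoch_Suc[of "?Q^(e+1)" "?Q^2" r] by simp
  qed
  have n1: "qpoch (?Q^2) (?Q^2) r \<noteq> 0" by (rule qpoch_ne0) simp
  have n2: "qpoch (?Q^(e+1)) (?Q^2) r \<noteq> 0" by (rule qpoch_ne0) simp
  have n3: "1 - ?Q^(2*r+2) \<noteq> 0" by (rule omq_ne0) simp
  have n4: "1 - ?Q^(e+2*r+1) \<noteq> 0" by (rule omq_ne0) simp
  have exn: "Suc r * (2 * Suc r - 1) + e * Suc r = (r*(2*r-1) + e*r) + (4*r+1+e)"
    by (cases r) (simp_all add: algebra_simps)
  have ex: "?Q^(Suc r * (2 * Suc r - 1) + e * Suc r) = ?Q^(4*r+1+e) * ?Q^(r*(2*r-1) + e*r)"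
    unfolding exn by (simp add: power_add)
  have G: "\<And>P D A B U V :: ratfun. A \<noteq> 0 \<Longrightarrow> B \<noteq> 0 \<Longrightarrow> U \<noteq> 0 \<Longrightarrow> V \<noteq> 0 \<Longrightarrow>
      P * D / (A * U * (B * V)) * U * V = P * (D / (A * B))"
    by (simp add: field_simps)
  show ?thesis unfolding Bc_def[of "Suc r"] ex K1 K2 unfolding Bc_def by (rule G[OF n1 n2 n3 n4])
qed

lemma gen_a:
  fixes a b c q2 V B0 B1 B2 E :: ratfun
  assumes a: "1 - a \<noteq> 0" and h1: "B2*(1-a) = q2*V*B0" and h2: "B1*(1-c)*(1-a) = q2*a*B0"
  shows "(1-a*b)*(B2*E) = V*q2*B0*E + V*(1-c)*B1*((1-b)*E)"
proof -
  have "(1-a) * ((1-a*b)*(B2*E)) = (1-a*b)*E*(B2*(1-a))" by (simp add: algebra_simps)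
  also have "\<dots> = (1-a*b)*E*(q2*V*B0)" by (simp only: h1)
  also have "\<dots> = (1-a)*(V*q2*B0*E) + V*(1-b)*E*(q2*a*B0)" by (simp add: algebra_simps)
  also have "\<dots> = (1-a)*(V*q2*B0*E) + V*(1-b)*E*(B1*(1-c)*(1-a))" by (simp only: h2)
  also have "\<dots> = (1-a) * (V*q2*B0*E + V*(1-c)*B1*((1-b)*E))" by (simp add: algebra_simps)
  finally show ?thesis using a by simp
qed

lemma step_b: "(1 - qvar^(Suc N)) * (1 - qvar^(e+1)) * (Bc r e * einv (int (Suc N) - 2 * int r)) =
   (1 - qvar^(e+1)) * qvar^(2*r) * Bc r e * einv (int N - 2*int r)
   + (1 - qvar^(e+1)) * (1 - qvar^(2*r)) * Bc r e * einv (int (Suc N) - 2*int r)"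
proof (cases "2*r \<le> Suc N")
  case True
  then obtain M where M: "Suc N = 2*r + M" by (metis le_add_diff_inverse)
  have e2: "int (Suc N) - 2*int r = int M" using M by simp
  have "int N - 2*int r = int M - 1" using M by simp
  hence e1: "einv (int N - 2*int r) = (1 - qvar^M) * einv (int M)" using einv_step[of M] by simp
  have p: "qvar^(Suc N) = qvar^(2*r) * qvar^M" unfolding M by (rule power_add)
  show ?thesis by (simp only: e1 e2 p) (simp add: algebra_simps)
next
  case False
  hence "einv (int (Suc N) - 2 * int r) = 0" "einv (int N - 2 * int r) = 0"
    by (auto intro!: einv_neg)
  thus ?thesis by simp
qed

lemma step_a: "(1 - qvar^(e + Suc N)) * (Bc r (e+2) * einv (int N - 2*int r)) =
   (1 - qvar^(e+1)) * qvar^(2*r) * Bc r e * einv (int N - 2*int r)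
   + (1 - qvar^(e+1)) * (1 - qvar^(2*Suc r)) * Bc (Suc r) e * einv (int (Suc N) - 2*int (Suc r))"
proof (cases "2*r \<le> N")
  case True
  then obtain M where M: "N = 2*r + M" by (metis le_add_diff_inverse)
  have e2: "int N - 2*int r = int M" using M by simp
  have "int (Suc N) - 2*int (Suc r) = int M - 1" using M by simp
  hence e1: "einv (int (Suc N) - 2*int (Suc r)) = (1 - qvar^M) * einv (int M)" using einv_step[of M] by simp
  have "e + Suc N = (e+2*r+1) + M" using M by simp
  hence p: "qvar^(e + Suc N) = qvar^(e+2*r+1) * qvar^M" by (simp only: power_add)
  have p2: "qvar^(4*r+1+e) = qvar^(2*r) * qvar^(e+2*r+1)" by (simp add: power_add[symmetric])
  have p3: "2 * Suc r = 2*r+2" by simp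
  have W: "1 - qvar^(e+2*r+1) \<noteq> 0" by (rule omq_ne0) simp
  have h2: "Bc (Suc r) e * (1 - qvar^(2*r+2)) * (1 - qvar^(e+2*r+1)) = qvar^(2*r) * qvar^(e+2*r+1) * Bc r e"
    using Bc_R3[of r e] unfolding p2 .
  show ?thesis unfolding e1 e2 p p3
    by (rule gen_a[OF W Bc_R2[of r e] h2])
next
  case False
  hence "einv (int (Suc N) - 2 * int (Suc r)) = 0" "einv (int N - 2 * int r) = 0"
    by (auto intro!: einv_neg)
  thus ?thesis by simp
qed

theorem phi_expand: "e > 0 \<Longrightarrow> phi N e = (\<Sum>r=0..N. Bc r e * einv (int N - 2 * int r))"
proof (induct N arbitrary: e)
  case 0
  thus ?case by (simp add: phi_0 Bc_0 einv_def)
next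
  case (Suc N)
  define X where "X r = (1 - qvar^(e+1)) * qvar^(2*r) * Bc r e * einv (int N - 2*int r)" for r
  define Y where "Y r = (1 - qvar^(e+1)) * (1 - qvar^(2*r)) * Bc r e * einv (int (Suc N) - 2*int r)" for r
  define K where "K = (1 - qvar^(Suc N)) * (1 - qvar^(e+1))"
  have K0: "K \<noteq> 0" unfolding K_def using omq_ne0[of "Suc N"] omq_ne0[of "e+1"] by simp
  have IH: "phi N (e+2) = (\<Sum>r=0..N. Bc r (e+2) * einv (int N - 2 * int r))"
    using Suc by simp
  have X0: "X (Suc N) = 0" unfolding X_def by (simp add: einv_neg)
  have Y0: "Y 0 = 0" unfolding Y_def by simp
  have "K * (\<Sum>r=0..Suc N. Bc r e * einv (int (Suc N) - 2 * int r)) = (\<Sum>r=0..Suc N. X r + Y r)"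
    unfolding sum_distrib_left K_def X_def Y_def by (intro sum.cong refl step_b)
  also have "\<dots> = (\<Sum>r=0..N. X r) + (\<Sum>r=0..N. Y (Suc r))"
    unfolding sum.distrib sum.atLeast0_atMost_Suc[of X N] sum.atLeast0_atMost_Suc_shift[of Y N]
    using X0 Y0 by simp
  also have "\<dots> = (\<Sum>r=0..N. X r + Y (Suc r))" by (simp add: sum.distrib)
  also have "\<dots> = (1 - qvar^(e + Suc N)) * phi N (e+2)"
    unfolding IH sum_distrib_left X_def Y_def by (intro sum.cong refl step_a[symmetric])
  also have "\<dots> = phi (Suc N) e * K" unfolding K_def using phi_rec[OF Suc.prems, of N] by (simp add: ac_simps)
  finally show ?case using K0 by (simp add: ac_simps)
qed

definition Pm :: "int list \<Rightarrow> nat \<Rightarrow> nat \<Rightarrow> ratfun" where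
  "Pm a n k = einv (a!(k-1) + 1 - 2*int n)"

definition Um :: "nat \<Rightarrow> nat \<Rightarrow> nat \<Rightarrow> ratfun" where
  "Um x i n = (if i \<le> n then Bc (n-i) (2*x+2*i) else 0)"

lemma sum_trunc:
  fixes g :: "nat \<Rightarrow> ratfun"
  assumes "\<And>r. r > min A B \<Longrightarrow> g r = 0"
  shows "sum g {0..A} = sum g {0..B}"
proof -
  have "sum g {0..A} = sum g {0..min A B}"
  proof (rule sum.mono_neutral_right)
    show "{0..min A B} \<subseteq> {0..A}" by auto
    show "\<forall>i\<in>{0..A} - {0..min A B}. g i = 0" using assms by auto
  qed simp
  also have "\<dots> = sum g {0..B}"
  proof (rule sum.mono_neutral_left)
    show "{0..min A B} \<subseteq> {0..B}" by auto
    show "\<forall>i\<in>{0..B} - {0..min A B}. g i = 0" using assms by auto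
  qed simp
  finally show ?thesis .
qed

lemma mprime_factor:
  assumes i: "1 \<le> i" "i \<le> m" and ak: "a!(k-1) \<le> 2*int m"
  shows "mprime a x i k = (\<Sum>n=1..m. Um x i n * Pm a n k)"
proof -
  define e where "e = 2*x+2*i"
  define K where "K = a!(k-1) + 1 - 2*int i"
  have e0: "e > 0" using i unfolding e_def by simp
  have "(\<Sum>n=1..m. Um x i n * Pm a n k) = (\<Sum>n=i..m. Bc (n-i) e * Pm a n k)"
    by (rule sum.mono_neutral_cong_right) (use i in \<open>auto simp: Um_def e_def\<close>)
  also have "\<dots> = (\<Sum>n=0+i..(m-i)+i. Bc (n-i) e * Pm a n k)" using i by simp
  also have "\<dots> = (\<Sum>r=0..m-i. Bc r e * einv (K - 2*int r))"
    unfolding sum.shift_bounds_cl_nat_ivl by (intro sum.cong refl) (simp add: Pm_def K_def algebra_simps)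
  finally have R: "(\<Sum>n=1..m. Um x i n * Pm a n k) = (\<Sum>r=0..m-i. Bc r e * einv (K - 2*int r))" .
  show ?thesis
  proof (cases "K \<ge> 0")
    case True
    have M: "mprime a x i k = phi (nat K) e"
      using True unfolding mprime_def phi_def Let_def K_def e_def by simp
    have "phi (nat K) e = (\<Sum>r=0..nat K. Bc r e * einv (K - 2*int r))"
      using phi_expand[OF e0, of "nat K"] True by simp
    also have "\<dots> = (\<Sum>r=0..m-i. Bc r e * einv (K - 2*int r))"
    proof (rule sum_trunc)
      fix r assume r: "min (nat K) (m - i) < r"
      have "K - 2 * int r < 0"
      proof (cases "nat K < r")
        case True thus ?thesis using \<open>K \<ge> 0\<close> by linarith
      next
        case False
        hence "m - i < r" using r by simp
        thus ?thesis using ak i unfolding K_def by linarith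
      qed
      thus "Bc r e * einv (K - 2 * int r) = 0" by (simp add: einv_neg)
    qed
    finally show ?thesis using M R by simp
  next
    case False
    have M: "mprime a x i k = 0"
      using False unfolding mprime_def Let_def K_def by simp
    have "(\<Sum>r=0..m-i. Bc r e * einv (K - 2*int r)) = 0"
      using False by (intro sum.neutral) (simp add: einv_neg)
    thus ?thesis using M R by simp
  qed
qed



lemma perm_fix_last:
  assumes p: "p permutes {..<Suc L}" and pL: "p L = L"
  shows "p permutes {..<L}"
  unfolding permutes_def
proof (intro conjI allI impI)
  fix x assume "x \<notin> {..<L}"
  thus "p x = x" using pL permutes_not_in[OF p, of x] by (cases "x = L") auto
next
  fix y show "\<exists>!x. p x = y" using p unfolding permutes_def by blast
qed

lemma rearr:
  fixes c :: "nat \<Rightarrow> nat"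
  shows "(\<And>x y. x < y \<Longrightarrow> y < L \<Longrightarrow> c x < c y) \<Longrightarrow> p permutes {..<L} \<Longrightarrow> (\<Sum>i<L. i * c (p i)) \<le> (\<Sum>i<L. i * c i) \<and>
          (p \<noteq> id \<longrightarrow> (\<Sum>i<L. i * c (p i)) < (\<Sum>i<L. i * c i))"
proof (induct L arbitrary: p)
  case 0
  hence "p = id" by (simp add: permutes_def fun_eq_iff)
  thus ?case by simp
next
  case (Suc L)
  have fixcase: "(\<Sum>i<Suc L. i * c (q i)) \<le> (\<Sum>i<Suc L. i * c i) \<and>
          (q \<noteq> id \<longrightarrow> (\<Sum>i<Suc L. i * c (q i)) < (\<Sum>i<Suc L. i * c i))"
    if q: "q permutes {..<Suc L}" "q L = L" for q
  proof -
    have q': "q permutes {..<L}" by (rule perm_fix_last[OF q])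
    have "q \<noteq> id \<Longrightarrow> q \<noteq> id" by simp
    have cL: "\<And>x y. x < y \<Longrightarrow> y < L \<Longrightarrow> c x < c y" using Suc.prems(1) by simp
    from Suc.hyps[OF cL q'] show ?thesis using q(2) by (auto simp: id_def)
  qed
  show ?case
  proof (cases "p L = L")
    case True thus ?thesis using fixcase[OF Suc.prems(2) True] by blast
  next
    case False
    have p: "p permutes {..<Suc L}" by (rule Suc.prems(2))
    obtain i0 where i0: "p i0 = L" using p unfolding permutes_def by blast
    have i0L: "i0 < Suc L" using permutes_in_image[OF p, of i0] i0 by simp
    have i0ne: "i0 \<noteq> L" using i0 False by auto
    have pLl: "p L < L" using permutes_in_image[OF p, of L] False by simp
    define t where "t = p \<circ> transpose i0 L"
    have t: "t permutes {..<Suc L}" unfolding t_def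
      by (rule permutes_compose[OF permutes_swap_id p]) (use i0L in auto)
    have tL: "t L = L" unfolding t_def using i0 by simp
    have ti0: "t i0 = p L" unfolding t_def by simp
    have tother: "t x = p x" if "x \<noteq> i0" "x \<noteq> L" for x unfolding t_def using that by simp
    define R where "R = (\<Sum>i\<in>{..<Suc L} - {i0} - {L}. i * c (p i))"
    have Rt: "R = (\<Sum>i\<in>{..<Suc L} - {i0} - {L}. i * c (t i))"
      unfolding R_def by (intro sum.cong refl) (simp add: tother)
    have split: "(\<Sum>i<Suc L. i * c (f i)) = i0 * c (f i0) + (L * c (f L) + (\<Sum>i\<in>{..<Suc L} - {i0} - {L}. i * c (f i)))" for f
    proof -
      have "(\<Sum>i<Suc L. i * c (f i)) = i0 * c (f i0) + (\<Sum>i\<in>{..<Suc L} - {i0}. i * c (f i))"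
        by (rule sum.remove) (use i0L in auto)
      also have "(\<Sum>i\<in>{..<Suc L} - {i0}. i * c (f i)) = L * c (f L) + (\<Sum>i\<in>{..<Suc L} - {i0} - {L}. i * c (f i))"
        by (rule sum.remove) (use i0ne in auto)
      finally show ?thesis .
    qed
    have Sp: "(\<Sum>i<Suc L. i * c (p i)) = i0 * c L + (L * c (p L) + R)" using split[of p] i0 R_def by simp
    have St: "(\<Sum>i<Suc L. i * c (t i)) = i0 * c (p L) + (L * c L + R)" using split[of t] tL ti0 Rt by simp
    obtain e where e: "L = i0 + e" "e > 0" using i0L i0ne by (metis less_SucE less_imp_add_positive)
    have cpl: "c (p L) < c L" using Suc.prems(1)[OF pLl] by simp
    obtain d where d: "c L = c (p L) + d" "d > 0" using cpl by (metis less_imp_add_positive)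
    have key: "\<And>x B d e::nat. 0<e \<Longrightarrow> 0<d \<Longrightarrow> x*(B+d) + (x+e)*B < x*B + (x+e)*(B+d)"
      by (simp add: algebra_simps)
    have "i0 * c L + L * c (p L) < i0 * c (p L) + L * c L"
      using key[OF e(2) d(2), of i0 "c (p L)"] by (simp only: e(1)[symmetric] d(1)[symmetric])
    hence lt: "(\<Sum>i<Suc L. i * c (p i)) < (\<Sum>i<Suc L. i * c (t i))" unfolding Sp St by simp
    have "(\<Sum>i<Suc L. i * c (t i)) \<le> (\<Sum>i<Suc L. i * c i)" using fixcase[OF t tL] by simp
    thus ?thesis using lt by simp
  qed
qed


definition ent :: "nat \<Rightarrow> nat \<Rightarrow> complex poly" where
  "ent n c = (if 2*n \<le> c then (\<Prod>u<2*n. 1 - monom 1 (c - 2*n + 1 + u)) else 0)"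

lemma factor_ne0: "t \<ge> 1 \<Longrightarrow> (1 - monom (1::complex) t) \<noteq> 0"
proof
  assume t: "t \<ge> 1" and h: "1 - monom (1::complex) t = 0"
  have "coeff (1 - monom (1::complex) t) t = -1" using t by simp
  thus False using h by simp
qed

lemma degree_factor: "t \<ge> 1 \<Longrightarrow> degree (1 - monom (1::complex) t) = t"
proof -
  assume t: "t \<ge> 1"
  have "1 - monom (1::complex) t = - monom 1 t + 1" by simp
  also have "degree \<dots> = degree (- monom (1::complex) t)"
    by (rule degree_add_eq_left) (use t in \<open>simp add: degree_monom_eq\<close>)
  also have "\<dots> = t" by (simp add: degree_monom_eq)
  finally show ?thesis .
qed

lemma ent_eq: "2*n \<le> c \<Longrightarrow> ent n c = (\<Prod>u<2*n. 1 - monom 1 (c - 2*n + 1 + u))"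
  unfolding ent_def by (rule if_P)

lemma ent_factors_ne0: "\<forall>u\<in>{..<2*n}. 1 - monom (1::complex) (c - 2*n + 1 + u) \<noteq> 0"
  by (intro ballI factor_ne0) simp

lemma ent_ne0: "2*n \<le> c \<Longrightarrow> ent n c \<noteq> 0"
  using ent_factors_ne0[of n c] by (simp only: ent_eq prod_zero_iff[OF finite_lessThan]) blast

lemma ent_zero_iff: "ent n c \<noteq> 0 \<Longrightarrow> 2*n \<le> c"
  unfolding ent_def by (auto split: if_splits)

lemma gauss_aux: "(\<Sum>u<d. s + u) * 2 + d = d * (2*s + d :: nat)"
  by (induct d) (simp_all add: algebra_simps)

lemma degree_ent: assumes "2*n \<le> c" shows "degree (ent n c) + 2*n*n = 2*n*c + n"
proof -
  have "degree (ent n c) = (\<Sum>u<2*n. degree (1 - monom (1::complex) (c - 2*n + 1 + u)))"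
    unfolding ent_eq[OF assms] by (rule degree_prod_eq_sum_degree[OF ent_factors_ne0])
  also have "\<dots> = (\<Sum>u<2*n. (c - 2*n + 1) + u)" by (intro sum.cong refl) (simp add: degree_factor)
  finally have D: "degree (ent n c) = (\<Sum>u<2*n. (c - 2*n + 1) + u)" .
  obtain r where r: "c = 2*n + r" using assms by (metis le_add_diff_inverse)
  have G: "(\<Sum>u<2*n. (c - 2*n + 1) + u) * 2 + 2*n = 2*n * (2*(c-2*n+1) + 2*n)" by (rule gauss_aux)
  have "degree (ent n c) * 2 + 2*n = 2*n * (2*(r+1) + 2*n)" using G D r by simp
  hence "degree (ent n c) + n = n * (2*(r+1) + 2*n)" by (simp add: algebra_simps)
  thus ?thesis unfolding r by (simp add: algebra_simps)
qed

lemma to_fract_prod: "to_fract (prod f A) = (\<Prod>x\<in>A. to_fract (f x))"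
  by (induct A rule: infinite_finite_induct) auto

lemma to_fract_monom: "to_fract (monom (1::complex) t) = qvar ^ t"
  by (simp add: qvar_pow monom_altdef)

lemma qpoch_split: "qpoch qvar qvar (s + d) = qpoch qvar qvar s * (\<Prod>u<d. 1 - qvar^(s+1+u))"
proof (induct d)
  case 0 thus ?case by simp
next
  case (Suc d)
  have "qpoch qvar qvar (s + Suc d) = qpoch qvar qvar (s + d) * (1 - qvar * qvar^(s+d))"
    using qpoch_Suc[of qvar qvar "s+d"] by simp
  also have "qvar * qvar^(s+d) = qvar^(s+1+d)" by simp
  finally show ?case using Suc by (simp add: ac_simps)
qed

lemma einv_ent: "einv (int c - 2*int n) = to_fract (ent n c) / qpoch qvar qvar c"
proof (cases "2*n \<le> c")
  case True
  have c: "c = (c - 2*n) + 2*n" using True by simp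
  have "to_fract (ent n c) = (\<Prod>u<2*n. 1 - qvar^(c - 2*n + 1 + u))"
    using True unfolding ent_def by (simp add: to_fract_prod to_fract_monom)
  moreover have "qpoch qvar qvar c = qpoch qvar qvar (c - 2*n) * (\<Prod>u<2*n. 1 - qvar^(c - 2*n + 1 + u))"
    by (subst c) (rule qpoch_split)
  moreover have "einv (int c - 2*int n) = 1 / qpoch qvar qvar (c - 2*n)"
  proof -
    have h: "int c - 2*int n = int (c - 2*n)" using True by simp
    show ?thesis unfolding h einv_def by simp
  qed
  ultimately show ?thesis using qpoch_ne0'[of c] qpoch_ne0'[of "c - 2*n"]
    by (simp add: field_simps)
next
  case False
  thus ?thesis by (simp add: einv_def ent_def)
qed

lemma sum_deg_less:
  fixes f :: "'a \<Rightarrow> complex poly"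
  assumes "finite S" "\<forall>x\<in>S. f x = 0 \<or> degree (f x) < D"
  shows "sum f S = 0 \<or> degree (sum f S) < D"
  using assms
proof (induct S rule: finite_induct)
  case empty thus ?case by simp
next
  case (insert x F)
  have IH: "sum f F = 0 \<or> degree (sum f F) < D" using insert by simp
  have fx: "f x = 0 \<or> degree (f x) < D" using insert by simp
  show ?case
  proof (cases "f x = 0")
    case True thus ?thesis using IH insert by simp
  next
    case False
    hence dx: "degree (f x) < D" using fx by simp
    show ?thesis
    proof (cases "sum f F = 0")
      case True thus ?thesis using dx insert by simp
    next
      case False
      hence "degree (sum f F) < D" using IH by simp
      hence "degree (f x + sum f F) \<le> D - 1" using dx by (intro degree_add_le) auto
      hence "degree (f x + sum f F) < D" using dx by linarith
      thus ?thesis using insert by simp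
    qed
  qed
qed

lemma degree_signof: "degree (signof p * (q :: complex poly)) = degree q"
  by (cases p rule: sign_cases) (simp_all)

lemma det_ent_ne0:
  fixes c :: "nat \<Rightarrow> nat"
  assumes cm: "\<And>x y. x < y \<Longrightarrow> y < L \<Longrightarrow> c x < c y"
    and cb: "\<And>i. i < L \<Longrightarrow> 2*(s+i) \<le> c i"
  shows "det (mat L L (\<lambda>(i,l). ent (s+i) (c l))) \<noteq> 0"
proof -
  define A where "A = mat L L (\<lambda>(i,l). ent (s+i) (c l))"
  define P where "P = {p. p permutes {0..<L}}"
  define T where "T p = signof p * (\<Prod>i=0..<L. ent (s+i) (c (p i)))" for p
  have AC: "A \<in> carrier_mat L L" unfolding A_def by simp
  have detA: "det A = (\<Sum>p\<in>P. T p)"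
    unfolding det_def'[OF AC] P_def T_def
  proof (intro sum.cong refl arg_cong2[where f="(*)"] prod.cong)
    fix p i assume p: "p \<in> {p. p permutes {0..<L}}" and i: "i \<in> {0..<L}"
    have "p i < L" using permutes_in_image[of p "{0..<L}" i] p i by simp
    thus "A $$ (i, p i) = ent (s+i) (c (p i))" using i unfolding A_def by simp
  qed
  define D where "D = (\<Sum>i=0..<L. degree (ent (s+i) (c i)))"
  have Tid: "T id = (\<Prod>i=0..<L. ent (s+i) (c i))" unfolding T_def by simp
  have Tid0: "T id \<noteq> 0" unfolding Tid using cb by (auto simp: ent_ne0)
  have dTid: "degree (T id) = D" unfolding Tid D_def
    by (rule degree_prod_eq_sum_degree) (use cb in \<open>auto simp: ent_ne0\<close>)
  have other: "T p = 0 \<or> degree (T p) < D" if p: "p \<in> P - {id}" for p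
  proof (cases "\<exists>i\<in>{0..<L}. ent (s+i) (c (p i)) = 0")
    case True thus ?thesis unfolding T_def by simp
  next
    case False
    have pp: "p permutes {..<L}" using p unfolding P_def by (simp add: atLeast0LessThan)
    have pne: "p \<noteq> id" using p by simp
    have cond: "2*(s+i) \<le> c (p i)" if "i < L" for i
    proof -
      have "ent (s+i) (c (p i)) \<noteq> 0" using False that by auto
      thus ?thesis by (rule ent_zero_iff)
    qed
    have dT: "degree (T p) = (\<Sum>i=0..<L. degree (ent (s+i) (c (p i))))"
      unfolding T_def degree_signof
      by (rule degree_prod_eq_sum_degree) (use False in auto)
    have E1: "(\<Sum>i<L. degree (ent (s+i) (c (p i)))) + (\<Sum>i<L. 2*(s+i)*(s+i))
        = (\<Sum>i<L. 2*(s+i)*c (p i) + (s+i))"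
      unfolding sum.distrib[symmetric] by (intro sum.cong refl degree_ent cond) simp
    have E2: "(\<Sum>i<L. degree (ent (s+i) (c i))) + (\<Sum>i<L. 2*(s+i)*(s+i))
        = (\<Sum>i<L. 2*(s+i)*c i + (s+i))"
      unfolding sum.distrib[symmetric] by (intro sum.cong refl degree_ent cb) simp
    have perm: "(\<Sum>i<L. c (p i)) = (\<Sum>i<L. c i)"
      using sum.permute[OF pp, of c] by (simp add: comp_def)
    have R: "(\<Sum>i<L. i * c (p i)) < (\<Sum>i<L. i * c i)"
      using rearr[of L c p] cm pp pne by blast
    have X: "(\<Sum>i<L. 2*(s+i)*c (p i) + (s+i)) = 2*s*(\<Sum>i<L. c (p i)) + 2*(\<Sum>i<L. i * c (p i)) + (\<Sum>i<L. s+i)"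
      by (simp add: sum.distrib sum_distrib_left algebra_simps)
    have Y: "(\<Sum>i<L. 2*(s+i)*c i + (s+i)) = 2*s*(\<Sum>i<L. c i) + 2*(\<Sum>i<L. i * c i) + (\<Sum>i<L. s+i)"
      by (simp add: sum.distrib sum_distrib_left algebra_simps)
    have "(\<Sum>i<L. degree (ent (s+i) (c (p i)))) < (\<Sum>i<L. degree (ent (s+i) (c i)))"
    proof -
      have X': "(\<Sum>i<L. 2*(s+i)*c (p i) + (s+i)) = 2*s*(\<Sum>i<L. c i) + 2*(\<Sum>i<L. i * c (p i)) + (\<Sum>i<L. s+i)"
        by (simp only: X perm)
      show ?thesis using E1 E2 X' Y R by linarith
    qed
    thus ?thesis unfolding dT D_def by (simp add: atLeast0LessThan)
  qed
  have idP: "id \<in> P" unfolding P_def by simp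
  have finP: "finite P" unfolding P_def by (rule finite_permutations) simp
  have "det A = T id + (\<Sum>p\<in>P - {id}. T p)" unfolding detA by (rule sum.remove[OF finP idP])
  moreover have "(\<Sum>p\<in>P - {id}. T p) = 0 \<or> degree (\<Sum>p\<in>P - {id}. T p) < D"
    by (rule sum_deg_less) (use finP other in auto)
  ultimately have "det A \<noteq> 0"
  proof -
    assume d: "det A = T id + (\<Sum>p\<in>P - {id}. T p)"
      and r: "(\<Sum>p\<in>P - {id}. T p) = 0 \<or> degree (\<Sum>p\<in>P - {id}. T p) < D"
    show ?thesis
    proof
      assume "det A = 0"
      hence "(\<Sum>p\<in>P - {id}. T p) = - T id" using d by (simp add: eq_neg_iff_add_eq_0 add.commute)
      thus False using r Tid0 dTid by auto
    qed
  qed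
  thus ?thesis unfolding A_def .
qed



interpretation to_fract_hom: comm_ring_hom "to_fract :: 'a :: idom \<Rightarrow> 'a fract"
  by unfold_locales auto

lemma solve_col:
  assumes adm: "admissible a" and j: "1 \<le> j" "j \<le> length a"
  shows "\<exists>g. \<forall>n\<in>{j+1..length a}. Pm a n j + (\<Sum>k=j+1..length a. Pm a n k * g k) = 0"
proof -
  define m where "m = length a"
  define L where "L = m - j"
  define cc where "cc l = nat (a!(j+l) + 1)" for l
  have bnd: "2*int k - 1 \<le> a!(k-1)" if "k \<in> {1..m}" for k
    using adm that unfolding admissible_def m_def by blast
  have srt: "a!p < a!q" if "p < q" "q < m" for p q
    using adm that unfolding admissible_def m_def by (auto intro: sorted_wrt_nth_less)
  have ccint: "int (cc l) = a!(j+l) + 1" if "l < L" for l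
  proof -
    have "2*int (j+l+1) - 1 \<le> a!(j+l+1-1)" using bnd[of "j+l+1"] that unfolding L_def by auto
    thus ?thesis unfolding cc_def by simp
  qed
  have cm: "cc x < cc y" if "x < y" "y < L" for x y
  proof -
    have "a!(j+x) < a!(j+y)" using srt[of "j+x" "j+y"] that j unfolding L_def by simp
    thus ?thesis using ccint[of x] ccint[of y] that by simp
  qed
  have cb: "2*((j+1)+i) \<le> cc i" if "i < L" for i
  proof -
    have "2*int (j+i+1) - 1 \<le> a!(j+i+1-1)" using bnd[of "j+i+1"] that unfolding L_def by auto
    thus ?thesis using ccint[OF that] by simp
  qed
  have Pm_ent: "Pm a n (j+1+l) = to_fract (ent n (cc l)) / qpoch qvar qvar (cc l)" if "l < L" for n l
  proof -
    have "a!(j+1+l-1) + 1 - 2*int n = int (cc l) - 2*int n" using ccint[OF that] by simp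
    thus ?thesis unfolding Pm_def using einv_ent by simp
  qed
  define Ap where "Ap = mat L L (\<lambda>(i,l). ent ((j+1)+i) (cc l))"
  have dAp: "det Ap \<noteq> 0" unfolding Ap_def by (rule det_ent_ne0) (use cm cb in auto)
  define Af where "Af = map_mat to_fract Ap"
  have AfC: "Af \<in> carrier_mat L L" unfolding Af_def Ap_def by simp
  have dAf: "det Af \<noteq> 0" unfolding Af_def using dAp by simp
  from det_non_zero_imp_unit[OF AfC dAf, of "()"]
  obtain B where BC: "B \<in> carrier_mat L L" and AB: "Af * B = 1\<^sub>m L"
    unfolding Units_def ring_mat_def by auto
  define w where "w = vec L (\<lambda>i. - Pm a (j+1+i) j)"
  define y where "y = B *\<^sub>v w"
  have Ay: "Af *\<^sub>v y = w"
  proof -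
    have "Af *\<^sub>v y = (Af * B) *\<^sub>v w" unfolding y_def
      by (rule assoc_mult_mat_vec[symmetric, OF AfC BC]) (simp add: w_def)
    also have "\<dots> = w" unfolding AB by (simp add: w_def)
    finally show ?thesis .
  qed
  have dy: "dim_vec y = L" unfolding y_def using BC by simp
  define g where "g k = y $ (k - (j+1)) * qpoch qvar qvar (cc (k - (j+1)))" for k
  show ?thesis
  proof (intro exI[of _ g] ballI)
    fix n assume n: "n \<in> {j+1..length a}"
    define i where "i = n - (j+1)"
    have iL: "i < L" using n unfolding i_def L_def m_def by auto
    have ni: "n = (j+1) + i" using n unfolding i_def by auto
    have "(\<Sum>k=j+1..length a. Pm a n k * g k) = (\<Sum>k\<in>{0+(j+1)..<L+(j+1)}. Pm a n k * g k)"
      using j by (intro sum.cong refl) (auto simp: L_def m_def)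
    also have "\<dots> = (\<Sum>l\<in>{0..<L}. Pm a n (l+(j+1)) * g (l+(j+1)))"
      by (rule sum.shift_bounds_nat_ivl)
    also have "\<dots> = (\<Sum>l\<in>{0..<L}. to_fract (ent n (cc l)) * y $ l)"
    proof (intro sum.cong refl)
      fix l assume l: "l \<in> {0..<L}"
      have "Pm a n (l+(j+1)) = to_fract (ent n (cc l)) / qpoch qvar qvar (cc l)"
        using Pm_ent[of l n] l by (simp add: ac_simps)
      thus "Pm a n (l+(j+1)) * g (l+(j+1)) = to_fract (ent n (cc l)) * y $ l"
        unfolding g_def using qpoch_ne0'[of "cc l"] by simp
    qed
    also have "\<dots> = (Af *\<^sub>v y) $ i"
      using iL dy unfolding Af_def Ap_def ni
      by (simp add: scalar_prod_def)
    also have "\<dots> = - Pm a n j" unfolding Ay w_def using iL ni by simp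
    finally show "Pm a n j + (\<Sum>k=j+1..length a. Pm a n k * g k) = 0" by simp
  qed
qed

lemma adm_le: "admissible a \<Longrightarrow> k \<in> {1..length a} \<Longrightarrow> a!(k-1) \<le> 2 * int (length a)"
  unfolding admissible_def by blast

theorem mainTheorem2:
  fixes a :: "int list"
  assumes "irreducible_seq a"
  shows "\<exists>f :: nat \<Rightarrow> nat \<Rightarrow> ratfun.
           (\<forall>i\<in>{1..length a}. \<forall>j\<in>{1..length a}. i < j \<longrightarrow> f i j = 0) \<and>
           (\<forall>i\<in>{1..length a}. f i i = 1) \<and>
           (\<exists>d :: nat \<Rightarrow> ratfun. \<forall>x :: nat.
              (\<forall>i\<in>{1..length a}. \<forall>j\<in>{1..length a}. j < i \<longrightarrow>
                  matmul (length a) (mprime a x) f i j = 0) \<and>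
              (\<forall>i\<in>{1..length a}. matmul (length a) (mprime a x) f i i = d i))"
proof -
  define m where "m = length a"
  have adm: "admissible a" using assms unfolding irreducible_seq_def by simp
  have "\<forall>j\<in>{1..m}. \<exists>g. \<forall>n\<in>{j+1..m}. Pm a n j + (\<Sum>k=j+1..m. Pm a n k * g k) = 0"
    using solve_col[OF adm] unfolding m_def by auto
  then obtain G where G: "\<forall>j\<in>{1..m}. \<forall>n\<in>{j+1..m}. Pm a n j + (\<Sum>k=j+1..m. Pm a n k * G j k) = 0"
    by (metis (no_types) bchoice)
  define f where "f i j = (if i = j then 1 else if j < i then G j i else 0)" for i j
  define V where "V n j = (\<Sum>k=1..m. Pm a n k * f k j)" for n j
  have VZ: "V n j = 0" if jn: "j \<in> {1..m}" "n \<in> {1..m}" "j < n" for n j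
  proof -
    have "V n j = (\<Sum>k=j..m. Pm a n k * f k j)"
      unfolding V_def by (rule sum.mono_neutral_cong_right) (use jn in \<open>auto simp: f_def\<close>)
    also have "\<dots> = Pm a n j * f j j + (\<Sum>k=Suc j..m. Pm a n k * f k j)"
      using jn by (subst sum.atLeast_Suc_atMost) auto
    also have "\<dots> = Pm a n j + (\<Sum>k=j+1..m. Pm a n k * G j k)"
      by (simp add: f_def)
    also have "\<dots> = 0" using G jn by auto
    finally show ?thesis .
  qed
  have MM: "matmul m (mprime a x) f i j = (\<Sum>n=1..m. Um x i n * V n j)"
    if ij: "i \<in> {1..m}" "j \<in> {1..m}" for i j x
  proof -
    have "matmul m (mprime a x) f i j = (\<Sum>k=1..m. (\<Sum>n=1..m. Um x i n * Pm a n k) * f k j)"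
      unfolding matmul_def
      by (intro sum.cong refl arg_cong2[where f="(*)"] mprime_factor)
         (use ij adm_le[OF adm] in \<open>auto simp: m_def\<close>)
    also have "\<dots> = (\<Sum>k=1..m. \<Sum>n=1..m. Um x i n * (Pm a n k * f k j))"
      unfolding sum_distrib_right by (simp add: ac_simps)
    also have "\<dots> = (\<Sum>n=1..m. \<Sum>k=1..m. Um x i n * (Pm a n k * f k j))"
      by (rule sum.swap)
    also have "\<dots> = (\<Sum>n=1..m. Um x i n * V n j)"
      by (simp add: V_def sum_distrib_left)
    finally show ?thesis .
  qed
  show ?thesis
  proof (intro exI[of _ f] conjI ballI impI exI[of _ "\<lambda>i. V i i"] allI)
    fix i j assume "i \<in> {1..length a}" "j \<in> {1..length a}" "i < j"
    thus "f i j = 0" by (simp add: f_def)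
  next
    fix i assume "i \<in> {1..length a}"
    thus "f i i = 1" by (simp add: f_def)
  next
    fix x i j assume ij: "i \<in> {1..length a}" "j \<in> {1..length a}" "j < i"
    have "(\<Sum>n=1..m. Um x i n * V n j) = 0"
    proof (intro sum.neutral ballI)
      fix n assume n: "n \<in> {1..m}"
      show "Um x i n * V n j = 0"
      proof (cases "i \<le> n")
        case True thus ?thesis using VZ[of j n] ij n by (simp add: m_def)
      next
        case False thus ?thesis by (simp add: Um_def)
      qed
    qed
    thus "matmul (length a) (mprime a x) f i j = 0" using MM[of i j x] ij by (simp add: m_def)
  next
    fix x i assume i: "i \<in> {1..length a}"
    have "(\<Sum>n=1..m. Um x i n * V n i) = Um x i i * V i i"
    proof -
      have im: "i \<in> {1..m}" using i by (simp add: m_def)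
      have Z: "\<forall>n\<in>{1..m} - {i}. Um x i n * V n i = 0"
      proof
        fix n assume n: "n \<in> {1..m} - {i}"
        show "Um x i n * V n i = 0"
        proof (cases "i \<le> n")
          case True hence "i < n" using n by auto
          thus ?thesis using VZ[of i n] i n by (simp add: m_def)
        next
          case False thus ?thesis by (simp add: Um_def)
        qed
      qed
      show ?thesis using sum.remove[OF _ im, of "\<lambda>n. Um x i n * V n i"] Z by simp
    qed
    also have "\<dots> = V i i" by (simp add: Um_def Bc_0)
    finally show "matmul (length a) (mprime a x) f i i = V i i" using MM[of i i x] i by (simp add: m_def)
  qed
qed

end
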